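(* Let $n\ge2$ and let $T=(n;\sigma,\delta,\sigma)$ with $\sigma,\delta\in\mathbb{R}$, $\sigma\ne0$. Then the eigenvalues $\lambda_h=\delta+2\sigma\cos\frac{h\pi}{n+1}$ have $\mathcal S_{\mathcal T}$-structured condition numbers \[ \kappa_{\mathcal S_{\mathcal T}}(\lambda_h)=\sqrt{\frac1n+\frac2{n-1}\cos^2\frac{h\pi}{n+1}},\qquad h=1,\dots,n. \]
   Context: $(n;\sigma,\delta,\tau)$ is the $n\times n$ tridiagonal Toeplitz matrix with diagonal $\delta$, superdiagonal $\tau$, subdiagonal $\sigma$. For $T=(n;\sigma,\delta,\sigma)$ real, the unit vector $\widetilde x_h$ proportional to $(\sin\frac{hk\pi}{n+1})_{k=1}^n$ is a right and left eigenvector for $\lambda_h$, $\kappa(\lambda_h)=1$, and $W_h=\widetilde x_h\widetilde x_h^H$. $\mathcal S_{\mathcal T}$ denotes the real subspace of real symmetric $n\times n$ tridiagonal Toeplitz matrices; $W_h|_{\mathcal S_{\mathcal T}}$ is the orthogonal projection of $W_h$ onto $\mathcal S_{\mathcal T}$ with respect to the (real) Frobenius inner product $\mathrm{Re}\,\mathrm{tr}(A^HB)$, and $\kappa_{\mathcal S_{\mathcal T}}(\lambda_h)=\kappa(\lambda_h)\|W_h|_{\mathcal S_{\mathcal T}}\|_F$. *)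

theory Defs
  imports Complex_Main
begin

text \<open>n x n real matrices are represented as functions nat => nat => real,
  with entries indexed by 0..n-1 (entry (i,j) is row i+1, column j+1 of the paper);
  vectors of length n as nat => real indexed by 0..n-1.\<close>

definition tridiag_toeplitz :: "nat \<Rightarrow> real \<Rightarrow> real \<Rightarrow> real \<Rightarrow> (nat \<Rightarrow> nat \<Rightarrow> real)" where
  "tridiag_toeplitz n \<sigma> \<delta> \<tau> = (\<lambda>i j.
     if i < n \<and> j < n then
       (if i = j then \<delta> else if j = i + 1 then \<tau> else if i = j + 1 then \<sigma> else 0)
     else 0)"

definition sym_tridiag_toeplitz_space :: "nat \<Rightarrow> (nat \<Rightarrow> nat \<Rightarrow> real) set" where
  "sym_tridiag_toeplitz_space n = {tridiag_toeplitz n s d s | s d. True}"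

definition frob_inner :: "nat \<Rightarrow> (nat \<Rightarrow> nat \<Rightarrow> real) \<Rightarrow> (nat \<Rightarrow> nat \<Rightarrow> real) \<Rightarrow> real" where
  "frob_inner n A B = (\<Sum>i<n. \<Sum>j<n. A i j * B i j)"

definition frob_norm :: "nat \<Rightarrow> (nat \<Rightarrow> nat \<Rightarrow> real) \<Rightarrow> real" where
  "frob_norm n A = sqrt (frob_inner n A A)"

definition orth_proj :: "nat \<Rightarrow> (nat \<Rightarrow> nat \<Rightarrow> real) set \<Rightarrow> (nat \<Rightarrow> nat \<Rightarrow> real) \<Rightarrow> (nat \<Rightarrow> nat \<Rightarrow> real)" where
  "orth_proj n S W = (THE P. P \<in> S \<and> (\<forall>Y\<in>S. frob_inner n (\<lambda>i j. W i j - P i j) Y = 0))"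

definition vnorm :: "nat \<Rightarrow> (nat \<Rightarrow> real) \<Rightarrow> real" where
  "vnorm n x = sqrt (\<Sum>k<n. x k ^ 2)"

definition vinner :: "nat \<Rightarrow> (nat \<Rightarrow> real) \<Rightarrow> (nat \<Rightarrow> real) \<Rightarrow> real" where
  "vinner n x y = (\<Sum>k<n. x k * y k)"

definition sin_eigvec :: "nat \<Rightarrow> nat \<Rightarrow> (nat \<Rightarrow> real)" where
  "sin_eigvec n h = (let v = (\<lambda>k. sin (real h * real (k + 1) * pi / real (n + 1)))
                     in (\<lambda>k. v k / vnorm n v))"

definition eig_cond :: "nat \<Rightarrow> (nat \<Rightarrow> real) \<Rightarrow> (nat \<Rightarrow> real) \<Rightarrow> real" where
  "eig_cond n x y = vnorm n x * vnorm n y / \<bar>vinner n y x\<bar>"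

definition outer :: "(nat \<Rightarrow> real) \<Rightarrow> (nat \<Rightarrow> nat \<Rightarrow> real)" where
  "outer x = (\<lambda>i j. x i * x j)"

definition struct_cond_ST :: "nat \<Rightarrow> nat \<Rightarrow> real" where
  "struct_cond_ST n h = (let x = sin_eigvec n h in
     eig_cond n x x * frob_norm n (orth_proj n (sym_tridiag_toeplitz_space n) (outer x)))"

definition mat_vec :: "nat \<Rightarrow> (nat \<Rightarrow> nat \<Rightarrow> real) \<Rightarrow> (nat \<Rightarrow> real) \<Rightarrow> (nat \<Rightarrow> real)" where
  "mat_vec n A x = (\<lambda>i. \<Sum>j<n. A i j * x j)"

end

theory Submission
  imports Defs
begin

lemma fi_lin2: "frob_inner n A (\<lambda>i j. c * B i j + d * C i j) = c * frob_inner n A B + d * frob_inner n A C"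
  by (simp add: frob_inner_def sum_distrib_left sum.distrib algebra_simps)

lemma fi_sym: "frob_inner n A B = frob_inner n B A"
  by (simp add: frob_inner_def mult.commute)

lemma fi_diff1: "frob_inner n (\<lambda>i j. A i j - B i j) C = frob_inner n A C - frob_inner n B C"
  by (simp add: frob_inner_def sum_subtractf left_diff_distrib)

lemma fi_outer: "frob_inner n (outer x) B = (\<Sum>i<n. x i * mat_vec n B x i)"
  by (simp add: frob_inner_def outer_def mat_vec_def sum_distrib_left mult_ac)

lemma tri_decomp: "tridiag_toeplitz n s d s = (\<lambda>i j. d * tridiag_toeplitz n 0 1 0 i j + s * tridiag_toeplitz n 1 0 1 i j)"
  by (auto simp: tridiag_toeplitz_def fun_eq_iff)

lemma mat_vec_tri:
  assumes "i < n"
  shows "mat_vec n (tridiag_toeplitz n s d s) y i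
     = d * y i + s * (if Suc i < n then y (Suc i) else 0) + s * (if 0 < i then y (i - 1) else 0)"
proof -
  have e: "tridiag_toeplitz n s d s i j * y j
      = (if j = i then d * y j else 0) + (if j = Suc i then s * y j else 0) + (if Suc j = i then s * y j else 0)"
    if "j < n" for j using that assms by (auto simp: tridiag_toeplitz_def)
  have "mat_vec n (tridiag_toeplitz n s d s) y i
      = (\<Sum>j<n. (if j = i then d * y j else 0) + (if j = Suc i then s * y j else 0) + (if Suc j = i then s * y j else 0))"
    unfolding mat_vec_def by (rule sum.cong) (auto simp: e)
  also have "\<dots> = d * y i + s * (if Suc i < n then y (Suc i) else 0) + (\<Sum>j<n. (if Suc j = i then s * y j else 0))"
    using assms by (simp add: sum.distrib)
  also have "(\<Sum>j<n. (if Suc j = i then s * y j else 0)) = s * (if 0 < i then y (i - 1) else 0)"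
  proof (cases i)
    case 0 then show ?thesis by simp
  next
    case (Suc k)
    then have "(\<Sum>j<n. (if Suc j = i then s * y j else 0)) = (\<Sum>j<n. (if j = k then s * y j else 0))"
      by (intro sum.cong) auto
    then show ?thesis using Suc assms by simp
  qed
  finally show ?thesis .
qed

lemma eig_gen:
  assumes "g 0 = 0" "g (Suc n) = 0" "\<And>k. g k + g (Suc (Suc k)) = 2 * C * g (Suc k)" "i < n"
  shows "mat_vec n (tridiag_toeplitz n s d s) (\<lambda>k. g (Suc k)) i = (d + 2 * s * C) * g (Suc i)"
proof -
  have 1: "(if Suc i < n then g (Suc (Suc i)) else 0) = g (Suc (Suc i))"
    proof (cases "Suc i < n")
    case False
    then have "Suc (Suc i) = Suc n" using assms(4) by simp
    then show ?thesis using False assms(2) by simp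
  qed simp
  have 2: "(if 0 < i then g (Suc (i - 1)) else 0) = g i"
    using assms(1) by (cases i) auto
  show ?thesis
  proof -
    have "mat_vec n (tridiag_toeplitz n s d s) (\<lambda>k. g (Suc k)) i
        = d * g (Suc i) + s * (g i + g (Suc (Suc i)))"
      using mat_vec_tri[OF assms(4), of s d "\<lambda>k. g (Suc k)"] 1 2 by (simp add: algebra_simps)
    also have "\<dots> = (d + 2 * s * C) * g (Suc i)" using assms(3)[of i] by (simp add: algebra_simps)
    finally show ?thesis .
  qed
qed


lemma sum_ind_count:
  assumes "n \<ge> 1"
  shows "(\<Sum>i<n. (if Suc i < n then 1 else 0) + (if 0 < i then 1 else (0::real))) = 2 * (real n - 1)"
proof -
  obtain m where n: "n = Suc m" using assms by (cases n) auto
  have a: "(\<Sum>i<n. (if Suc i < n then 1 else (0::real))) = real m"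
    unfolding n by (simp add: sum.lessThan_Suc)
  have b: "(\<Sum>i<n. (if 0 < i then 1 else (0::real))) = real m"
    unfolding n by (simp only: sum.lessThan_Suc_shift) simp
  show ?thesis using a b n by (simp add: sum.distrib)
qed

theorem proposition14:
  fixes n :: nat and \<sigma> \<delta> :: real
  assumes "n \<ge> 2" and "\<sigma> \<noteq> 0"
  shows "\<forall>h \<in> {1..n}.
    (let T = tridiag_toeplitz n \<sigma> \<delta> \<sigma>;
         lam = \<delta> + 2 * \<sigma> * cos (real h * pi / real (n + 1));
         x = sin_eigvec n h
     in (\<forall>i<n. mat_vec n T x i = lam * x i)
        \<and> struct_cond_ST n h
            = sqrt (1 / real n + 2 / (real n - 1) * (cos (real h * pi / real (n + 1)))\<^sup>2))"
proof
  fix h assume hin: "h \<in> {1..n}"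
  define N where "N = real (n + 1)"
  have Npos: "N > 0" unfolding N_def by simp
  define C where "C = cos (real h * pi / N)"
  define v where "v = (\<lambda>k. sin (real h * real (k + 1) * pi / real (n + 1)))"
  define c where "c = vnorm n v"
  define g where "g = (\<lambda>k. sin (real h * real k * pi / N) / c)"
  define x where "x = sin_eigvec n h"
  have xg: "x = (\<lambda>k. g (Suc k))"
    unfolding x_def sin_eigvec_def g_def v_def c_def N_def Let_def by (simp add: fun_eq_iff)
  have g0: "g 0 = 0" by (simp add: g_def)
  have gN: "g (Suc n) = 0"
  proof -
    have "real h * real (Suc n) * pi / N = real h * pi" unfolding N_def by simp
    then show ?thesis by (simp add: g_def sin_npi)
  qed
  have grec: "g k + g (Suc (Suc k)) = 2 * C * g (Suc k)" for k
  proof -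
    define a where "a = real h * real (Suc k) * pi / N"
    define t where "t = real h * pi / N"
    have 1: "real h * real k * pi / N = a - t" unfolding a_def t_def using Npos by (simp add: field_simps)
    have 2: "real h * real (Suc (Suc k)) * pi / N = a + t" unfolding a_def t_def using Npos by (simp add: field_simps)
    have "sin (a - t) + sin (a + t) = 2 * cos t * sin a" by (simp add: sin_add sin_diff)
    then show ?thesis unfolding g_def 1 2 C_def t_def[symmetric] a_def[symmetric]
      by (simp add: add_divide_distrib[symmetric])
  qed
  have eig: "mat_vec n (tridiag_toeplitz n s d s) x i = (d + 2 * s * C) * x i" if "i < n" for s d i
    unfolding xg using eig_gen[OF g0 gN grec that] .
  have hpos: "h \<ge> 1" "h \<le> n" using hin by auto
  have v0: "v 0 > 0"
  proof -
    have "0 < real h * pi / real (n+1)" using hpos by simp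
    moreover have "real h * pi / real (n+1) < pi"
    proof -
      have "real h * pi < real (n+1) * pi" using hpos by (intro mult_strict_right_mono) auto
      then show ?thesis by (simp add: divide_less_eq)
    qed
    ultimately show ?thesis unfolding v_def by (simp add: sin_gt_zero)
  qed
  define S where "S = (\<Sum>k<n. (v k)^2)"
  have Spos: "S > 0" unfolding S_def
    using hpos v0 by (intro sum_pos2[where i=0]) auto
  have cS: "c^2 = S" "c > 0" unfolding c_def vnorm_def S_def using Spos[unfolded S_def] by auto
  have x_v: "x = (\<lambda>k. v k / c)"
    unfolding x_def sin_eigvec_def c_def v_def Let_def by simp
  have sx: "(\<Sum>k<n. (x k)^2) = 1"
  proof -
    have "(\<Sum>k<n. (x k)^2) = (\<Sum>k<n. (v k)^2) / c^2"
      unfolding x_v by (simp add: power_divide sum_divide_distrib)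
    then show ?thesis using cS Spos unfolding S_def by simp
  qed
  have econd: "eig_cond n x x = 1"
    unfolding eig_cond_def vnorm_def vinner_def using sx by (simp add: power2_eq_square)
  define Id where "Id = tridiag_toeplitz n 0 1 0"
  define Ed where "Ed = tridiag_toeplitz n 1 0 1"
  define W where "W = outer x"
  have WI: "frob_inner n W Id = 1"
    unfolding W_def fi_outer Id_def using sx
    by (simp add: eig power2_eq_square)
  have WE: "frob_inner n W Ed = 2 * C"
  proof -
    have "frob_inner n W Ed = (\<Sum>i<n. 2 * C * (x i)^2)"
      unfolding W_def fi_outer Ed_def by (intro sum.cong) (simp_all add: eig power2_eq_square)
    then show ?thesis using sx by (simp add: sum_distrib_left[symmetric])
  qed
  have II: "frob_inner n Id Id = real n"
  proof -
    have "frob_inner n Id Id = frob_inner n (outer (\<lambda>_. 1)) Id"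
      unfolding frob_inner_def outer_def Id_def
      by (intro sum.cong refl) (auto simp: tridiag_toeplitz_def)
    also have "\<dots> = (\<Sum>i<n. 1)"
      unfolding fi_outer Id_def by (intro sum.cong refl) (simp add: mat_vec_tri)
    finally show ?thesis by simp
  qed
  have IE: "frob_inner n Id Ed = 0"
    unfolding frob_inner_def Id_def Ed_def
    by (intro sum.neutral ballI) (auto simp: tridiag_toeplitz_def)
  have EE: "frob_inner n Ed Ed = 2 * (real n - 1)"
  proof -
    have "frob_inner n Ed Ed = frob_inner n (outer (\<lambda>_. 1)) Ed"
      unfolding frob_inner_def outer_def Ed_def
      by (intro sum.cong refl) (auto simp: tridiag_toeplitz_def)
    also have "\<dots> = (\<Sum>i<n. (if Suc i < n then 1 else 0) + (if 0 < i then 1 else (0::real)))"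
      unfolding fi_outer Ed_def by (intro sum.cong refl) (simp add: mat_vec_tri)
    finally show ?thesis using sum_ind_count[of n] assms(1) by simp
  qed
  have PI: "frob_inner n (tridiag_toeplitz n s d s) Id = d * real n" for s d
    by (subst fi_sym, subst tri_decomp) (simp add: fi_lin2 II IE fi_sym[of n Id Ed] Id_def[symmetric] Ed_def[symmetric])
  have PE: "frob_inner n (tridiag_toeplitz n s d s) Ed = s * (2 * (real n - 1))" for s d
    by (subst fi_sym, subst tri_decomp) (simp add: fi_lin2 EE IE fi_sym[of n Ed Id] Id_def[symmetric] Ed_def[symmetric])
  have n1: "real n - 1 > 0" "real n > 0" using assms(1) by auto
  define a where "a = 1 / real n"
  define b where "b = C / (real n - 1)"
  define P0 where "P0 = tridiag_toeplitz n b a b"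
  let ?S = "sym_tridiag_toeplitz_space n"
  have IdS: "Id \<in> ?S" unfolding Id_def sym_tridiag_toeplitz_space_def by blast
  have EdS: "Ed \<in> ?S" unfolding Ed_def sym_tridiag_toeplitz_space_def by blast
  have P0S: "P0 \<in> ?S" unfolding P0_def sym_tridiag_toeplitz_space_def by blast
  have orth: "\<forall>Y\<in>?S. frob_inner n (\<lambda>i j. W i j - P0 i j) Y = 0"
  proof
    fix Y assume "Y \<in> ?S"
    then obtain s d where Y: "Y = tridiag_toeplitz n s d s" unfolding sym_tridiag_toeplitz_space_def by blast
    have "frob_inner n (\<lambda>i j. W i j - P0 i j) Y
        = d * (frob_inner n W Id - frob_inner n P0 Id) + s * (frob_inner n W Ed - frob_inner n P0 Ed)"
      unfolding Y by (subst tri_decomp) (simp add: fi_lin2 fi_diff1 Id_def Ed_def)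
    also have "\<dots> = 0" unfolding P0_def PI PE WI WE a_def b_def using n1 by (simp add: field_simps)
    finally show "frob_inner n (\<lambda>i j. W i j - P0 i j) Y = 0" .
  qed
  have proj: "orth_proj n ?S W = P0"
    unfolding orth_proj_def
  proof (rule the_equality)
    show "P0 \<in> ?S \<and> (\<forall>Y\<in>?S. frob_inner n (\<lambda>i j. W i j - P0 i j) Y = 0)" using P0S orth by blast
  next
    fix P assume P: "P \<in> ?S \<and> (\<forall>Y\<in>?S. frob_inner n (\<lambda>i j. W i j - P i j) Y = 0)"
    then obtain s d where Pd: "P = tridiag_toeplitz n s d s" unfolding sym_tridiag_toeplitz_space_def by blast
    have 1: "frob_inner n W Id - frob_inner n P Id = 0" using P IdS by (simp add: fi_diff1)
    have 2: "frob_inner n W Ed - frob_inner n P Ed = 0" using P EdS by (simp add: fi_diff1)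
    have "d = a" using 1 n1 unfolding Pd PI WI a_def by (simp add: field_simps)
    moreover have "s = b" using 2 n1 unfolding Pd PE WE b_def by (simp add: field_simps)
    ultimately show "P = P0" unfolding Pd P0_def by simp
  qed
  have PP: "frob_inner n P0 P0 = 1 / real n + 2 / (real n - 1) * C^2"
  proof -
    have "frob_inner n P0 P0 = a * frob_inner n P0 Id + b * frob_inner n P0 Ed"
      by (subst (2) P0_def, subst tri_decomp) (simp add: fi_lin2 Id_def Ed_def)
    also have "\<dots> = 1 / real n + 2 / (real n - 1) * C^2"
    proof -
      have "a * (a * real n) = 1 / real n" unfolding a_def using n1 by (simp add: field_simps)
      moreover have "b * (b * (2 * (real n - 1))) = 2 / (real n - 1) * C^2"
      proof -
        have "C / m * (C / m * (2 * m)) = 2 / m * C^2" if "m > 0" for m :: real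
          using that by (simp add: field_simps power2_eq_square)
        then show ?thesis unfolding b_def using n1 by blast
      qed
      ultimately show ?thesis unfolding P0_def PI PE by simp
    qed
    finally show ?thesis .
  qed
  have sc: "struct_cond_ST n h = sqrt (1 / real n + 2 / (real n - 1) * C^2)"
    unfolding struct_cond_ST_def Let_def x_def[symmetric] W_def[symmetric] proj econd frob_norm_def PP
    by simp
  show "let T = tridiag_toeplitz n \<sigma> \<delta> \<sigma>;
         lam = \<delta> + 2 * \<sigma> * cos (real h * pi / real (n + 1));
         x = sin_eigvec n h
     in (\<forall>i<n. mat_vec n T x i = lam * x i)
        \<and> struct_cond_ST n h
            = sqrt (1 / real n + 2 / (real n - 1) * (cos (real h * pi / real (n + 1)))\<^sup>2)"
    unfolding Let_def x_def[symmetric] sc using eig unfolding C_def N_def by simp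
qed

end
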